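(* Let $\mathfrak h\in\mathrm{Mult}_\rho$, let $\Delta$ be a segment admissible to $\mathfrak h$, and let $\Delta'=[a',b']_\rho$ be linked to $\Delta$ with $\Delta'>\Delta$, such that $(\Delta,\Delta',\mathfrak h)$ satisfies the non-overlapping property. Then for every segment $\widetilde\Delta=[\widetilde a,b']_\rho$ with $\widetilde a\ge a'$ that is linked to $\Delta$, the triple $(\Delta,\widetilde\Delta,\mathfrak h)$ also satisfies the non-overlapping property.
   Context: Segments: for integers $a\le b$, $[a,b]_\rho$ (think of the integer interval $\{a,\dots,b\}$), with $a(\Delta)=a$, $b(\Delta)=b$, and inclusion of segments as intervals. Two segments are linked if their union is a segment (an interval) and neither contains the other; for linked $\Delta,\Delta'$ write $\Delta<\Delta'$ (or $\Delta'>\Delta$) if $b(\Delta)<b(\Delta')$. A multisegment is a finite multiset of nonempty segments; $\mathrm{Mult}_\rho$ is the set of multisegments. Write $[x,y]_\rho\prec^L[x',y']_\rho$ if $x<x'$, or $x=x'$ and $y<y'$. A segment $\Delta=[a,b]_\rho$ is admissible to $\mathfrak h$ if $\mathfrak h$ contains a segment $[a,c]_\rho$ with $c\ge b$. Removal sequence: for $\Delta=[a,b]_\rho$ admissible to $\mathfrak h$, let $\Delta_1=[a_1,b_1]_\rho$ be a shortest segment of $\mathfrak h$ with $a_1=a$ and $b_1\ge b$; recursively, let $\Delta_i=[a_i,b_i]_\rho$ be the $\prec^L$-minimal segment of $\mathfrak h$ with $a_{i-1}<a_i$ and $b\le b_i<b_{i-1}$, stopping when none exists; $\Delta_1,\dots,\Delta_r$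 is the removal sequence for $(\Delta,\mathfrak h)$. Non-overlapping property: for $\Delta$ admissible to $\mathfrak h$ and $\Delta'$ linked to $\Delta$ with $\Delta'>\Delta$, the triple $(\Delta,\Delta',\mathfrak h)$ satisfies it if, for the shortest segment $\overline\Delta$ in the removal sequence for $(\Delta,\mathfrak h)$ that contains the point $a(\Delta')-1$, one has $\Delta'\not\subset\overline\Delta$. *)

theory Defs
  imports Main "HOL-Library.Multiset"
begin

text \<open>A segment [a,b]_rho (rho fixed) is represented by the pair (a,b) of integers,
  standing for the integer interval {a..b}; it is a (nonempty) segment iff a \<le> b.\<close>

type_synonym seg = "int \<times> int"

definition is_seg :: "seg \<Rightarrow> bool" where
  "is_seg D \<longleftrightarrow> fst D \<le> snd D"

definition seg_set :: "seg \<Rightarrow> int set" where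
  "seg_set D = {fst D .. snd D}"

definition is_mult :: "seg multiset \<Rightarrow> bool" where
  "is_mult h \<longleftrightarrow> (\<forall>D\<in>#h. is_seg D)"

definition linked :: "seg \<Rightarrow> seg \<Rightarrow> bool" where
  "linked D D' \<longleftrightarrow>
     (\<exists>c d. seg_set D \<union> seg_set D' = {c..d}) \<and>
     \<not> seg_set D \<subseteq> seg_set D' \<and> \<not> seg_set D' \<subseteq> seg_set D"

definition seg_less :: "seg \<Rightarrow> seg \<Rightarrow> bool" where
  "seg_less D D' \<longleftrightarrow> linked D D' \<and> snd D < snd D'"

definition precL :: "seg \<Rightarrow> seg \<Rightarrow> bool" where
  "precL D D' \<longleftrightarrow> fst D < fst D' \<or> (fst D = fst D' \<and> snd D < snd D')"

definition admissible :: "seg \<Rightarrow> seg multiset \<Rightarrow> bool" where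
  "admissible D h \<longleftrightarrow> (\<exists>c. c \<ge> snd D \<and> (fst D, c) \<in># h)"

definition precL_min :: "seg set \<Rightarrow> seg" where
  "precL_min S = (THE D. D \<in> S \<and> (\<forall>E\<in>S. E \<noteq> D \<longrightarrow> precL D E))"

definition first_cands :: "seg \<Rightarrow> seg multiset \<Rightarrow> seg set" where
  "first_cands D h = {E \<in> set_mset h. fst E = fst D \<and> snd E \<ge> snd D}"

definition rem_first :: "seg \<Rightarrow> seg multiset \<Rightarrow> seg" where
  "rem_first D h = (THE E. E \<in> first_cands D h \<and>
      (\<forall>F\<in>first_cands D h. snd E - fst E \<le> snd F - fst F))"

definition next_cands :: "seg \<Rightarrow> seg multiset \<Rightarrow> seg \<Rightarrow> seg set" where
  "next_cands D h P = {E \<in> set_mset h. fst P < fst E \<and> snd D \<le> snd E \<and> snd E < snd P}"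

text \<open>rem_seq D h i = Some Delta_{i+1}, or None once the sequence has stopped.\<close>
primrec rem_seq :: "seg \<Rightarrow> seg multiset \<Rightarrow> nat \<Rightarrow> seg option" where
  "rem_seq D h 0 = Some (rem_first D h)"
| "rem_seq D h (Suc i) =
     (case rem_seq D h i of
        None \<Rightarrow> None
      | Some P \<Rightarrow> (if next_cands D h P = {} then None
                   else Some (precL_min (next_cands D h P))))"

definition rem_set :: "seg \<Rightarrow> seg multiset \<Rightarrow> seg set" where
  "rem_set D h = {E. \<exists>i. rem_seq D h i = Some E}"

text \<open>Non-overlapping property of the triple (D, D', h) (including its standing
  preconditions: D admissible to h, D' linked to D with D' > D).\<close>
definition non_overlapping :: "seg \<Rightarrow> seg \<Rightarrow> seg multiset \<Rightarrow> bool" where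
  "non_overlapping D D' h \<longleftrightarrow>
     admissible D h \<and> seg_less D D' \<and>
     (\<forall>Dbar. Dbar \<in> rem_set D h \<and> fst D' - 1 \<in> seg_set Dbar \<and>
        (\<forall>E\<in>rem_set D h. fst D' - 1 \<in> seg_set E \<longrightarrow> snd Dbar - fst Dbar \<le> snd E - fst E)
        \<longrightarrow> \<not> seg_set D' \<subseteq> seg_set Dbar)"

end

theory Submission
  imports Defs "HOL-Library.Product_Lexorder"
begin

lemma precL_lex: "precL D E \<longleftrightarrow> D < E"
  by (cases D; cases E) (auto simp: precL_def)

lemma precL_min_mem:
  assumes "finite S" "S \<noteq> {}"
  shows "precL_min S \<in> S"
proof -
  have P: "Min S \<in> S \<and> (\<forall>E\<in>S. E \<noteq> Min S \<longrightarrow> precL (Min S) E)"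
    using assms by (auto simp: precL_lex order.not_eq_order_implies_strict)
  have "precL_min S = Min S"
    unfolding precL_min_def
  proof (rule the1_equality)
    show "\<exists>!D. D \<in> S \<and> (\<forall>E\<in>S. E \<noteq> D \<longrightarrow> precL D E)"
    proof (rule ex1I[of _ "Min S"])
      show "Min S \<in> S \<and> (\<forall>E\<in>S. E \<noteq> Min S \<longrightarrow> precL (Min S) E)" using P .
      fix D assume "D \<in> S \<and> (\<forall>E\<in>S. E \<noteq> D \<longrightarrow> precL D E)"
      then show "D = Min S" using P unfolding precL_lex by (metis less_asym)
    qed
  qed (use P in auto)
  then show ?thesis using P by simp
qed

lemma rem_first_mem:
  assumes "admissible D h"
  shows "rem_first D h \<in> first_cands D h"
proof -
  let ?S = "first_cands D h"
  have fin: "finite ?S" unfolding first_cands_def by auto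
  have ne: "?S \<noteq> {}" using assms unfolding admissible_def first_cands_def by force
  obtain E where E: "E \<in> ?S" "\<forall>F\<in>?S. snd E - fst E \<le> snd F - fst F"
    using arg_min_if_finite[OF fin ne, of "\<lambda>E. snd E - fst E"] by (metis not_le)
  have "rem_first D h = E"
    unfolding rem_first_def
  proof (rule the1_equality)
    show "\<exists>!E. E \<in> ?S \<and> (\<forall>F\<in>?S. snd E - fst E \<le> snd F - fst F)"
    proof (rule ex1I[of _ E])
      show "E \<in> ?S \<and> (\<forall>F\<in>?S. snd E - fst E \<le> snd F - fst F)" using E by blast
      fix G assume G: "G \<in> ?S \<and> (\<forall>F\<in>?S. snd G - fst G \<le> snd F - fst F)"
      then have "snd G - fst G = snd E - fst E" using E by force
      moreover have "fst G = fst E" using G E by (auto simp: first_cands_def)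
      ultimately show "G = E" by (simp add: prod_eq_iff)
    qed
  qed (use E in auto)
  then show ?thesis using E by simp
qed

lemma rem_step:
  assumes "rem_seq D h (Suc i) = Some F"
  shows "\<exists>E. rem_seq D h i = Some E \<and> F \<in> next_cands D h E"
proof -
  obtain E where E: "rem_seq D h i = Some E"
    using assms by (cases "rem_seq D h i") auto
  have ne: "next_cands D h E \<noteq> {}" and F: "F = precL_min (next_cands D h E)"
    using assms E by (auto split: if_splits)
  have fin: "finite (next_cands D h E)" unfolding next_cands_def by auto
  show ?thesis using E F precL_min_mem[OF fin ne] by auto
qed

lemma rem_chain:
  assumes "rem_seq D h i = Some E"
  shows "rem_seq D h (i + Suc m) = Some F \<Longrightarrow> fst E < fst F \<and> snd F < snd E"
proof (induction m arbitrary: F)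
  case 0
  then obtain E' where "rem_seq D h i = Some E'" "F \<in> next_cands D h E'"
    using rem_step[of D h i F] by auto
  then show ?case using assms by (auto simp: next_cands_def)
next
  case (Suc m)
  then obtain E' where "rem_seq D h (i + Suc m) = Some E'" "F \<in> next_cands D h E'"
    using rem_step[of D h "i + Suc m" F] by auto
  then show ?case using Suc.IH by (fastforce simp: next_cands_def)
qed

lemma rem_mem:
  assumes "admissible D h"
  shows "rem_seq D h i = Some E \<Longrightarrow> E \<in># h \<and> snd D \<le> snd E"
proof (induction i arbitrary: E)
  case 0
  then show ?case using rem_first_mem[OF assms] by (auto simp: first_cands_def)
next
  case (Suc i)
  then show ?case using rem_step[of D h i E] by (auto simp: next_cands_def)
qed

lemma rem_set_chain:
  assumes "E \<in> rem_set D h" "F \<in> rem_set D h"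
  shows "E = F \<or> (fst E < fst F \<and> snd F < snd E) \<or> (fst F < fst E \<and> snd E < snd F)"
proof -
  obtain i j where i: "rem_seq D h i = Some E" and j: "rem_seq D h j = Some F"
    using assms by (auto simp: rem_set_def)
  consider "i = j" | "i < j" | "j < i" by linarith
  then show ?thesis
  proof cases
    case 1 then show ?thesis using i j by simp
  next
    case 2
    from less_imp_Suc_add[OF 2] obtain m where "j = Suc (i + m)" by blast
    then have "j = i + Suc m" by simp
    then have "rem_seq D h (i + Suc m) = Some F" using j by simp
    then show ?thesis using rem_chain[OF i] by blast
  next
    case 3
    from less_imp_Suc_add[OF 3] obtain m where "i = Suc (j + m)" by blast
    then have "i = j + Suc m" by simp
    then have "rem_seq D h (j + Suc m) = Some E" using i by simp
    then show ?thesis using rem_chain[OF j] by blast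
  qed
qed

lemma rem_set_sub:
  assumes "admissible D h" "E \<in> rem_set D h"
  shows "E \<in># h \<and> snd D \<le> snd E"
  using assms(2) rem_mem[OF assms(1)] unfolding rem_set_def by blast

theorem mainTheorem18:
  fixes h :: "seg multiset" and D D' :: seg and at :: int
  assumes "is_mult h"
    and "is_seg D" and "is_seg D'"
    and "admissible D h"
    and "linked D D'" and "seg_less D D'"
    and "non_overlapping D D' h"
    and "fst D' \<le> at" and "at \<le> snd D'"
    and "linked D (at, snd D')"
  shows "non_overlapping D (at, snd D') h"
proof -
  obtain a b where Dab: "D = (a, b)" by (cases D)
  obtain a' b' where Dab': "D' = (a', b')" by (cases D')
  have bb': "b < b'" using assms(6) Dab Dab' by (simp add: seg_less_def)
  have linkfacts: "fst X < fst Y \<and> fst Y \<le> snd X + 1"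
    if L: "linked X Y" and lt: "snd X < snd Y" and sg: "fst X \<le> snd X" "fst Y \<le> snd Y"
    for X Y :: seg
  proof -
    obtain c d where cd: "seg_set X \<union> seg_set Y = {c..d}"
      and n1: "\<not> seg_set X \<subseteq> seg_set Y" using L by (auto simp: linked_def)
    have "fst X < fst Y"
    proof (rule ccontr)
      assume "\<not> fst X < fst Y"
      then have "seg_set X \<subseteq> seg_set Y" using lt by (auto simp: seg_set_def)
      then show False using n1 by simp
    qed
    moreover have "fst Y \<le> snd X + 1"
    proof (rule ccontr)
      assume c: "\<not> fst Y \<le> snd X + 1"
      have "snd X \<in> {c..d}" "snd Y \<in> {c..d}" using cd sg by (auto simp: seg_set_def)
      then have "snd X + 1 \<in> {c..d}" using lt by auto
      then have "snd X + 1 \<in> seg_set X \<union> seg_set Y" using cd by simp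
      then show False using c by (simp add: seg_set_def)
    qed
    ultimately show ?thesis by simp
  qed
  have isD: "a \<le> b" using assms(2) Dab by (simp add: is_seg_def)
  have l1: "a < a' \<and> a' \<le> b + 1"
    using linkfacts[OF assms(5)] bb' isD assms(3) Dab Dab' by (simp add: is_seg_def)
  have l2: "a < at \<and> at \<le> b + 1"
    using linkfacts[OF assms(10)] bb' isD assms(9) Dab Dab' by simp
  have NO: "\<forall>Dbar. Dbar \<in> rem_set D h \<and> a' - 1 \<in> seg_set Dbar \<and>
        (\<forall>E\<in>rem_set D h. a' - 1 \<in> seg_set E \<longrightarrow> snd Dbar - fst Dbar \<le> snd E - fst E)
        \<longrightarrow> \<not> seg_set D' \<subseteq> seg_set Dbar"
    using assms(7) Dab' by (simp add: non_overlapping_def)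
  let ?S = "{E \<in> rem_set D h. a' - 1 \<in> seg_set E}"
  have fin: "finite ?S"
  proof (rule finite_subset[of _ "set_mset h"])
    show "?S \<subseteq> set_mset h" using rem_set_sub[OF assms(4)] by blast
  qed simp
  have r0: "rem_first D h \<in> rem_set D h"
  proof -
    have "rem_seq D h 0 = Some (rem_first D h)" by simp
    then show ?thesis unfolding rem_set_def by blast
  qed
  have r0f: "fst (rem_first D h) = a \<and> b \<le> snd (rem_first D h)"
  proof -
    have "rem_first D h \<in> first_cands D h" by (rule rem_first_mem[OF assms(4)])
    then have "fst (rem_first D h) = fst D \<and> snd D \<le> snd (rem_first D h)"
      unfolding first_cands_def by blast
    then show ?thesis using Dab by simp
  qed
  have "a' - 1 \<in> seg_set (rem_first D h)" using r0f l1 by (simp add: seg_set_def)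
  then have ne: "?S \<noteq> {}" using r0 by blast
  define f where "f = (\<lambda>E::seg. snd E - fst E)"
  define Dj where "Dj = arg_min_on f ?S"
  have Dj1: "Dj \<in> ?S" unfolding Dj_def by (rule arg_min_if_finite(1)[OF fin ne])
  have Dj1b: "f Dj \<le> f F" if "F \<in> ?S" for F
  proof -
    have "\<not> f F < f Dj" using arg_min_if_finite(2)[OF fin ne, of f] that unfolding Dj_def by blast
    then show ?thesis by simp
  qed
  have Dj: "Dj \<in> ?S" "\<forall>F\<in>?S. f Dj \<le> f F" using Dj1 Dj1b by blast+
  have "Dj \<in> rem_set D h \<and> a' - 1 \<in> seg_set Dj \<and>
        (\<forall>E\<in>rem_set D h. a' - 1 \<in> seg_set E \<longrightarrow> snd Dj - fst Dj \<le> snd E - fst E)"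
    using Dj unfolding f_def by blast
  then have Dj2: "\<not> seg_set D' \<subseteq> seg_set Dj" using NO by blast
  have fj: "fst Dj \<le> a' - 1" using Dj by (auto simp: seg_set_def)
  have sj: "b \<le> snd Dj" using rem_set_sub[OF assms(4)] Dj Dab by auto
  have sjb: "snd Dj < b'"
  proof (rule ccontr)
    assume "\<not> snd Dj < b'"
    then have "seg_set D' \<subseteq> seg_set Dj" using fj Dab' by (auto simp: seg_set_def)
    then show False using Dj2 by simp
  qed
  show ?thesis
    unfolding non_overlapping_def
  proof (intro conjI allI impI)
    show "admissible D h" by (rule assms(4))
    show "seg_less D (at, snd D')" using assms(10) bb' Dab Dab' by (simp add: seg_less_def)
    fix Dk assume H: "Dk \<in> rem_set D h \<and> fst (at, snd D') - 1 \<in> seg_set Dk \<and>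
        (\<forall>E\<in>rem_set D h. fst (at, snd D') - 1 \<in> seg_set E \<longrightarrow> snd Dk - fst Dk \<le> snd E - fst E)"
    have "at - 1 \<in> seg_set Dj" using fj sj l2 assms(8) Dab' by (auto simp: seg_set_def)
    then have len: "snd Dk - fst Dk \<le> snd Dj - fst Dj" using H Dj by auto
    have "Dk = Dj \<or> (fst Dk < fst Dj \<and> snd Dj < snd Dk) \<or> (fst Dj < fst Dk \<and> snd Dk < snd Dj)"
      using rem_set_chain[of Dk D h Dj] H Dj by blast
    then have "snd Dk \<le> snd Dj" using len by auto
    then show "\<not> seg_set (at, snd D') \<subseteq> seg_set Dk"
      using sjb assms(9) Dab' by (auto simp: seg_set_def)
  qed
qed

end
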